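(* Let $(X,d)$ be a complete metric space and $(\mathbb{H}(X),h)$ the space of nonempty compact subsets of $X$ with the Hausdorff metric. For each $i\in\mathbb{N}$ let $\mathcal{F}_i=\{X; f_{1,i},\dots,f_{n_i,i}\}$ be a family of Lipschitz maps $f_{r,i}:X\to X$ with set map $\mathcal{F}_i(A)=\bigcup_{r=1}^{n_i} f_{r,i}(A)$ and $L_{\mathcal{F}_i}=\max_r\mathrm{Lip}(f_{r,i})$, where $\lim_{k\to\infty}\prod_{i=1}^kL_{\mathcal{F}_i}=0$. Assume there exists a compact set $C\subseteq X$ with $f_{r,i}(C)\subseteq C$ for all $r=1,\dots,n_i$, $i\in\mathbb{N}$, and assume $\sum_{k=1}^\infty\prod_{i=1}^k L_{\mathcal{F}_i}<\infty$. Then there is a unique set $P\subseteq C$ such that for every nonempty compact $A\subseteq C$, the backward trajectory $\Psi_k(A)=\mathcal{F}_1\circ\mathcal{F}_2\circ\cdots\circ\mathcal{F}_k(A)$ converges to $P$ in $(\mathbb{H}(X),h)$.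
   Context: The Hausdorff metric is $h(B,C)=\max\{d(B,C),d(C,B)\}$ with $d(B,C)=\sup_{b\in B}\inf_{c\in C}d(b,c)$. *)

theory Defs
  imports "HOL-Analysis.Analysis"
begin

text \<open>Used only for nonempty compact sets, where the sup/inf are attained.\<close>
definition hexcess :: "'a::metric_space set \<Rightarrow> 'a set \<Rightarrow> real" where
  "hexcess B C = (SUP b\<in>B. INF c\<in>C. dist b c)"

definition hausdorff_metric :: "'a::metric_space set \<Rightarrow> 'a set \<Rightarrow> real" where
  "hausdorff_metric B C = max (hexcess B C) (hexcess C B)"

definition Lip :: "('a::metric_space \<Rightarrow> 'b::metric_space) \<Rightarrow> real" where
  "Lip f = Inf {L. L-lipschitz_on UNIV f}"

definition setmap :: "(nat \<Rightarrow> nat) \<Rightarrow> (nat \<Rightarrow> nat \<Rightarrow> 'a \<Rightarrow> 'a) \<Rightarrow> nat \<Rightarrow> 'a set \<Rightarrow> 'a set" where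
  "setmap n f i A = (\<Union>r\<in>{1..n i}. f r i ` A)"

definition LF :: "(nat \<Rightarrow> nat) \<Rightarrow> (nat \<Rightarrow> nat \<Rightarrow> 'a::metric_space \<Rightarrow> 'a) \<Rightarrow> nat \<Rightarrow> real" where
  "LF n f i = Max ((\<lambda>r. Lip (f r i)) ` {1..n i})"

text \<open>Backward trajectory Psi k A = F_1 (F_2 (... (F_k A))); Psi 0 A = A.\<close>
fun Psi :: "(nat \<Rightarrow> nat) \<Rightarrow> (nat \<Rightarrow> nat \<Rightarrow> 'a \<Rightarrow> 'a) \<Rightarrow> nat \<Rightarrow> 'a set \<Rightarrow> 'a set" where
  "Psi n f 0 A = A"
| "Psi n f (Suc k) A = Psi n f k (setmap n f (Suc k) A)"

end

theory Submission
  imports Defs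
begin

lemma hexcess_le:
  fixes A B :: "'a::metric_space set"
  assumes "A \<noteq> {}" "\<And>a. a \<in> A \<Longrightarrow> \<exists>c\<in>B. dist a c \<le> b"
  shows "hexcess A B \<le> b"
  unfolding hexcess_def
proof (rule cSUP_least[OF assms(1)])
  fix a assume "a \<in> A"
  then obtain c where c: "c \<in> B" "dist a c \<le> b" using assms(2) by blast
  have "(INF c\<in>B. dist a c) \<le> dist a c"
    by (rule cINF_lower[OF _ c(1)]) (auto intro: bdd_belowI[where m=0])
  then show "(INF c\<in>B. dist a c) \<le> b" using c(2) by linarith
qed

lemma hexcess_ex:
  fixes A B :: "'a::metric_space set"
  assumes "compact A" "compact B" "B \<noteq> {}" "a \<in> A"
  shows "\<exists>c\<in>B. dist a c \<le> hexcess A B"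
proof -
  obtain c where c: "c \<in> B" "\<And>y. y \<in> B \<Longrightarrow> dist a c \<le> dist a y"
    using continuous_attains_inf[OF assms(2,3), of "\<lambda>y. dist a y"] continuous_on_dist[OF continuous_on_const continuous_on_id]
    by blast
  have inf: "(INF y\<in>B. dist a y) = dist a c"
    by (rule antisym) (auto intro!: cINF_lower cINF_greatest c bdd_belowI[where m=0] simp: assms(3))
  obtain c0 where c0: "c0 \<in> B" using assms(3) by blast
  obtain e where e: "\<And>y. y \<in> A \<Longrightarrow> dist c0 y \<le> e"
    using compact_imp_bounded[OF assms(1)] unfolding bounded_any_center[of _ c0] by blast
  have bdd: "bdd_above ((\<lambda>x. INF y\<in>B. dist x y) ` A)"
  proof (rule bdd_aboveI[where M=e], clarify)
    fix x assume "x \<in> A"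
    have "(INF y\<in>B. dist x y) \<le> dist x c0"
      by (rule cINF_lower[OF _ c0]) (auto intro: bdd_belowI[where m=0])
    then show "(INF y\<in>B. dist x y) \<le> e" using e[OF \<open>x \<in> A\<close>] by (simp add: dist_commute)
  qed
  have "dist a c \<le> hexcess A B"
    unfolding hexcess_def inf[symmetric] by (rule cSUP_upper[OF assms(4) bdd])
  then show ?thesis using c(1) by blast
qed

lemma hexcess_nonneg:
  fixes A B :: "'a::metric_space set"
  assumes "compact A" "compact B" "A \<noteq> {}" "B \<noteq> {}"
  shows "0 \<le> hexcess A B"
proof -
  obtain a where "a \<in> A" using assms by blast
  from hexcess_ex[OF assms(1,2,4) this] show ?thesis by (meson order_trans zero_le_dist)
qed

abbreviation "hm \<equiv> hausdorff_metric"

lemma hm_le: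
  fixes A B :: "'a::metric_space set"
  assumes "A \<noteq> {}" "B \<noteq> {}" "\<And>a. a \<in> A \<Longrightarrow> \<exists>c\<in>B. dist a c \<le> b"
    "\<And>a. a \<in> B \<Longrightarrow> \<exists>c\<in>A. dist a c \<le> b"
  shows "hm A B \<le> b"
  unfolding hausdorff_metric_def using hexcess_le[OF assms(1,3)] hexcess_le[OF assms(2,4)] by simp

lemma hm_ex1:
  fixes A B :: "'a::metric_space set"
  assumes "compact A" "compact B" "B \<noteq> {}" "a \<in> A"
  shows "\<exists>c\<in>B. dist a c \<le> hm A B"
  using hexcess_ex[OF assms] unfolding hausdorff_metric_def by (meson max.cobounded1 order_trans)

lemma hm_sym: "hm A B = hm B A"
  unfolding hausdorff_metric_def by (simp add: max.commute)

lemma hm_ex2: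
  fixes A B :: "'a::metric_space set"
  assumes "compact A" "compact B" "A \<noteq> {}" "b \<in> B"
  shows "\<exists>c\<in>A. dist b c \<le> hm A B"
  using hm_ex1[OF assms(2,1,3,4)] hm_sym by metis

lemma hm_nonneg:
  fixes A B :: "'a::metric_space set"
  assumes "compact A" "compact B" "A \<noteq> {}" "B \<noteq> {}"
  shows "0 \<le> hm A B"
  using hexcess_nonneg[OF assms] unfolding hausdorff_metric_def by simp

lemma hm_triangle:
  fixes A B D :: "'a::metric_space set"
  assumes "compact A" "compact B" "compact D" "A \<noteq> {}" "B \<noteq> {}" "D \<noteq> {}"
  shows "hm A D \<le> hm A B + hm B D"
proof (rule hm_le[OF assms(4,6)])
  fix a assume "a \<in> A"
  then obtain b where b: "b \<in> B" "dist a b \<le> hm A B" using hm_ex1 assms by blast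
  then obtain d where d: "d \<in> D" "dist b d \<le> hm B D" using hm_ex1 assms by blast
  have "dist a d \<le> hm A B + hm B D" using b d dist_triangle[of a d b] by linarith
  then show "\<exists>c\<in>D. dist a c \<le> hm A B + hm B D" using d by blast
next
  fix d assume "d \<in> D"
  then obtain b where b: "b \<in> B" "dist d b \<le> hm B D" using hm_ex2 assms by blast
  then obtain a where a: "a \<in> A" "dist b a \<le> hm A B" using hm_ex2 assms by blast
  have "dist d a \<le> hm A B + hm B D" using a b dist_triangle[of d a b] by linarith
  then show "\<exists>c\<in>A. dist d c \<le> hm A B + hm B D" using a by blast
qed

lemma hm_zero:
  fixes A B :: "'a::metric_space set"
  assumes "compact A" "compact B" "A \<noteq> {}" "B \<noteq> {}" "hm A B \<le> 0"
  shows "A = B"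
proof
  show "A \<subseteq> B"
  proof
    fix a assume "a \<in> A"
    then obtain c where "c \<in> B" "dist a c \<le> hm A B" using hm_ex1 assms by blast
    then show "a \<in> B" using assms(5) by (metis dist_le_zero_iff order_trans)
  qed
  show "B \<subseteq> A"
  proof
    fix a assume "a \<in> B"
    then obtain c where "c \<in> A" "dist a c \<le> hm A B" using hm_ex2 assms by blast
    then show "a \<in> A" using assms(5) by (metis dist_le_zero_iff order_trans)
  qed
qed

lemma Lip_works:
  fixes g :: "'a::metric_space \<Rightarrow> 'b::metric_space"
  assumes "\<exists>L. L-lipschitz_on UNIV g"
  shows "(Lip g)-lipschitz_on UNIV g"
proof -
  define S where "S = {L. L-lipschitz_on UNIV g}"
  have ne: "S \<noteq> {}" using assms S_def by blast
  have nn: "0 \<le> Lip g" unfolding Lip_def S_def[symmetric]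
    by (rule cInf_greatest[OF ne]) (auto simp: S_def lipschitz_on_nonneg)
  show ?thesis
  proof (rule lipschitz_onI[OF _ nn])
    fix x y :: 'a
    show "dist (g x) (g y) \<le> Lip g * dist x y"
    proof (cases "x = y")
      case False
      then have d: "dist x y > 0" by simp
      have "dist (g x) (g y) / dist x y \<le> Lip g" unfolding Lip_def S_def[symmetric]
      proof (rule cInf_greatest[OF ne])
        fix L assume "L \<in> S"
        then have "dist (g x) (g y) \<le> L * dist x y" by (auto simp: S_def lipschitz_on_def)
        then show "dist (g x) (g y) / dist x y \<le> L" using d by (simp add: divide_le_eq)
      qed
      then show ?thesis using d by (simp add: divide_le_eq)
    qed simp
  qed
qed

lemma dec_fin:
  fixes K :: "nat \<Rightarrow> 'a set"
  assumes dec: "\<And>k. K (Suc k) \<subseteq> K k" and "finite F'" "F' \<subseteq> range K"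
  shows "\<exists>m. K m \<subseteq> \<Inter>F'"
proof -
  obtain I where I: "finite I" "F' = K ` I" using finite_subset_image[OF assms(2,3)] by auto
  have ds: "decseq K" using dec by (simp add: decseq_SucI)
  have "K (Max (insert 0 I)) \<subseteq> K i" if "i \<in> I" for i
    using decseqD[OF ds, of i "Max (insert 0 I)"] that I(1) by simp
  then show ?thesis using I by blast
qed

lemma nest_conv:
  fixes K :: "nat \<Rightarrow> 'a::metric_space set"
  assumes cK: "\<And>k. compact (K k)" and nK: "\<And>k. K k \<noteq> {}" and dec: "\<And>k. K (Suc k) \<subseteq> K k"
  shows "\<Inter>(range K) \<noteq> {}" "compact (\<Inter>(range K))" "(\<lambda>k. hm (K k) (\<Inter>(range K))) \<longlonglongrightarrow> 0"
proof -
  define P where "P = \<Inter>(range K)"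
  have ds: "decseq K" using dec by (simp add: decseq_SucI)
  have "K 0 \<inter> \<Inter>(range K) \<noteq> {}"
  proof (rule compact_imp_fip[OF cK])
    show "closed T" if "T \<in> range K" for T using that cK compact_imp_closed by blast
    fix F' assume "finite F'" "F' \<subseteq> range K"
    then obtain m where "K m \<subseteq> \<Inter>F'" using dec_fin[of K, OF dec] by blast
    moreover have "K m \<subseteq> K 0" using decseqD[OF ds, of 0 m] by simp
    ultimately show "K 0 \<inter> \<Inter>F' \<noteq> {}" using nK[of m] by blast
  qed
  then show Pne: "\<Inter>(range K) \<noteq> {}" by blast
  have cP: "compact P" unfolding P_def
  proof -
    have "\<Inter>(range K) = K 0 \<inter> \<Inter>(range K)" by blast
    moreover have "closed (\<Inter>(range K))" by (intro closed_INT) (simp add: cK compact_imp_closed)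
    then have "compact (K 0 \<inter> \<Inter>(range K))"
      by (rule compact_Int_closed[OF cK])
    ultimately show "compact (\<Inter>(range K))" by metis
  qed
  then show "compact (\<Inter>(range K))" unfolding P_def .
  show "(\<lambda>k. hm (K k) (\<Inter>(range K))) \<longlonglongrightarrow> 0"
    unfolding P_def[symmetric]
  proof (rule LIMSEQ_I)
    fix r :: real assume r: "r > 0"
    define e where "e = r / 2"
    have e: "e > 0" "e < r" using r by (auto simp: e_def)
    define U where "U = (\<Union>y\<in>P. ball y e)"
    have oU: "open U" unfolding U_def by auto
    have PU: "P \<subseteq> U" unfolding U_def using e by auto
    have "\<exists>m. K m \<subseteq> U"
    proof (rule ccontr)
      assume nm: "\<not> (\<exists>m. K m \<subseteq> U)"
      have "(K 0 - U) \<inter> \<Inter>(range K) \<noteq> {}"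
      proof (rule compact_imp_fip)
        show "compact (K 0 - U)" using cK oU by (simp add: compact_diff)
        show "closed T" if "T \<in> range K" for T using that cK compact_imp_closed by blast
        fix F' assume "finite F'" "F' \<subseteq> range K"
        then obtain m where "K m \<subseteq> \<Inter>F'" using dec_fin[of K, OF dec] by blast
        moreover have "K m \<subseteq> K 0" using decseqD[OF ds, of 0 m] by simp
        ultimately show "(K 0 - U) \<inter> \<Inter>F' \<noteq> {}" using nm by blast
      qed
      then show False using PU unfolding P_def by blast
    qed
    then obtain m where m: "K m \<subseteq> U" by blast
    show "\<exists>no. \<forall>k\<ge>no. norm (hm (K k) P - 0) < r"
    proof (intro exI allI impI)
      fix k assume "k \<ge> m"
      then have KU: "K k \<subseteq> U" using decseqD[OF ds, of m k] m by simp
      have PK: "P \<subseteq> K k" unfolding P_def by blast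
      have "hm (K k) P \<le> e"
      proof (rule hm_le[OF nK Pne[folded P_def]])
        fix a assume "a \<in> K k"
        then obtain y where "y \<in> P" "a \<in> ball y e" using KU unfolding U_def by blast
        then show "\<exists>c\<in>P. dist a c \<le> e" by (intro bexI[of _ y]) (auto simp: dist_commute)
      next
        fix a assume "a \<in> P"
        then show "\<exists>c\<in>K k. dist a c \<le> e" using PK e by (intro bexI[of _ a]) auto
      qed
      moreover have "0 \<le> hm (K k) P" using hm_nonneg[OF cK cP nK Pne[folded P_def]] .
      ultimately show "norm (hm (K k) P - 0) < r" using e by simp
    qed
  qed
qed

theorem mainTheorem7:
  fixes n :: "nat \<Rightarrow> nat"
    and f :: "nat \<Rightarrow> nat \<Rightarrow> 'a::complete_space \<Rightarrow> 'a"
    and C :: "'a set"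
  assumes n_pos: "\<And>i. i \<ge> 1 \<Longrightarrow> n i \<ge> 1"
    and lip: "\<And>i r. i \<ge> 1 \<Longrightarrow> r \<in> {1..n i} \<Longrightarrow> \<exists>L. L-lipschitz_on UNIV (f r i)"
    and prod_lim: "(\<lambda>k. \<Prod>i=1..k. LF n f i) \<longlonglongrightarrow> 0"
    and C_compact: "compact C" and C_ne: "C \<noteq> {}"
    and C_inv: "\<And>i r. i \<ge> 1 \<Longrightarrow> r \<in> {1..n i} \<Longrightarrow> f r i ` C \<subseteq> C"
    and sum_fin: "summable (\<lambda>k. \<Prod>i=1..k. LF n f i)"
  shows "\<exists>!P. P \<subseteq> C \<and> P \<noteq> {} \<and> compact P \<and>
           (\<forall>A. A \<noteq> {} \<and> compact A \<and> A \<subseteq> C \<longrightarrow>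
              (\<lambda>k. hausdorff_metric (Psi n f k A) P) \<longlonglongrightarrow> 0)"
proof -
  define M where "M i = LF n f i" for i
  define p where "p k = (\<Prod>i=1..k. M i)" for k
  have flip: "(M i)-lipschitz_on UNIV (f r i)" if "i \<ge> 1" "r \<in> {1..n i}" for i r
  proof (rule lipschitz_on_le[OF Lip_works[OF lip[OF that]]])
    show "Lip (f r i) \<le> M i" unfolding M_def LF_def using that by (intro Max_ge) auto
  qed
  have Mnn: "0 \<le> M i" if "i \<ge> 1" for i
    using flip[OF that, of 1] n_pos[OF that] lipschitz_on_nonneg by force
  have pnn: "0 \<le> p k" for k unfolding p_def by (intro prod_nonneg) (auto intro: Mnn)
  define Q where "Q A \<longleftrightarrow> compact A \<and> A \<noteq> {} \<and> A \<subseteq> C" for A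
  have smQ: "Q (setmap n f i A)" if "i \<ge> 1" "Q A" for i A
  proof -
    have "compact (setmap n f i A)" unfolding setmap_def
      using that flip lipschitz_on_continuous_on continuous_on_subset
      by (intro compact_UN) (auto simp: Q_def intro!: compact_continuous_image
          intro: continuous_on_subset[OF lipschitz_on_continuous_on[OF flip]])
    moreover have "setmap n f i A \<noteq> {}" using that n_pos[OF that(1)] unfolding setmap_def Q_def by auto
    moreover have "setmap n f i A \<subseteq> C" using that C_inv unfolding setmap_def Q_def by blast
    ultimately show ?thesis unfolding Q_def by blast
  qed
  have smmono: "setmap n f i A \<subseteq> setmap n f i B" if "A \<subseteq> B" for i A B
    using that unfolding setmap_def by blast
  have PsiQ: "Q (Psi n f k A)" if "Q A" for k A
    using that by (induction k arbitrary: A) (simp_all add: smQ)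
  have Psimono: "Psi n f k A \<subseteq> Psi n f k B" if "A \<subseteq> B" for k A B
    using that by (induction k arbitrary: A B) (simp_all add: smmono)
  have smcontr: "hm (setmap n f i A) (setmap n f i B) \<le> M i * hm A B"
    if i1: "i \<ge> 1" and QA: "Q A" and QB: "Q B" for i A B
  proof (rule hm_le)
    show "setmap n f i A \<noteq> {}" "setmap n f i B \<noteq> {}" using smQ that unfolding Q_def by auto
  next
    fix x assume "x \<in> setmap n f i A"
    then obtain r a where ra: "r \<in> {1..n i}" "a \<in> A" "x = f r i a" unfolding setmap_def by blast
    then obtain b where b: "b \<in> B" "dist a b \<le> hm A B" using hm_ex1[of A B a] QA QB unfolding Q_def by blast
    have "dist (f r i a) (f r i b) \<le> M i * dist a b" using flip[OF i1 ra(1)] lipschitz_onD by blast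
    also have "\<dots> \<le> M i * hm A B" using b Mnn[OF i1] by (simp add: mult_left_mono)
    finally show "\<exists>c\<in>setmap n f i B. dist x c \<le> M i * hm A B"
      using ra b unfolding setmap_def by blast
  next
    fix x assume "x \<in> setmap n f i B"
    then obtain r a where ra: "r \<in> {1..n i}" "a \<in> B" "x = f r i a" unfolding setmap_def by blast
    then obtain b where b: "b \<in> A" "dist a b \<le> hm A B" using hm_ex2[of A B a] QA QB unfolding Q_def by blast
    have "dist (f r i a) (f r i b) \<le> M i * dist a b" using flip[OF i1 ra(1)] lipschitz_onD by blast
    also have "\<dots> \<le> M i * hm A B" using b Mnn[OF i1] by (simp add: mult_left_mono)
    finally show "\<exists>c\<in>setmap n f i A. dist x c \<le> M i * hm A B"
      using ra b unfolding setmap_def by blast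
  qed
  have Psicontr: "hm (Psi n f k A) (Psi n f k B) \<le> p k * hm A B" if "Q A" "Q B" for k A B
    using that
  proof (induction k arbitrary: A B)
    case 0
    then show ?case by (simp add: p_def)
  next
    case (Suc k)
    have "hm (Psi n f (Suc k) A) (Psi n f (Suc k) B)
        = hm (Psi n f k (setmap n f (Suc k) A)) (Psi n f k (setmap n f (Suc k) B))" by simp
    also have "\<dots> \<le> p k * hm (setmap n f (Suc k) A) (setmap n f (Suc k) B)"
      using Suc smQ by auto
    also have "\<dots> \<le> p k * (M (Suc k) * hm A B)"
      using smcontr[of "Suc k" A B] Suc.prems pnn[of k] by (simp add: mult_left_mono)
    also have "\<dots> = p (Suc k) * hm A B" unfolding p_def by (simp add: prod.nat_ivl_Suc')
    finally show ?case .
  qed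
  have QC: "Q C" using C_compact C_ne by (simp add: Q_def)
  define K where "K k = Psi n f k C" for k
  have QK: "Q (K k)" for k unfolding K_def using PsiQ[OF QC] .
  have decK: "K (Suc k) \<subseteq> K k" for k
    unfolding K_def using Psimono[of "setmap n f (Suc k) C" C k] smQ[OF _ QC, of "Suc k"]
    by (simp add: Q_def)
  define P where "P = \<Inter>(range K)"
  have cK: "compact (K k)" "K k \<noteq> {}" for k using QK[of k] by (auto simp: Q_def)
  note nc = nest_conv[of K, OF cK decK, folded P_def]
  have QP: "Q P" using nc QK unfolding Q_def P_def by blast
  have p0: "p \<longlonglongrightarrow> 0" using prod_lim unfolding p_def M_def .
  have conv: "(\<lambda>k. hm (Psi n f k A) P) \<longlonglongrightarrow> 0" if QA: "Q A" for A
  proof (rule tendsto_sandwich[where f="\<lambda>_. 0" and h="\<lambda>k. p k * hm A C + hm (K k) P"])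
    show "\<forall>\<^sub>F k in sequentially. 0 \<le> hm (Psi n f k A) P"
    proof (rule always_eventually, rule allI)
      fix k show "0 \<le> hm (Psi n f k A) P"
        using hm_nonneg[of "Psi n f k A" P] PsiQ[OF QA, of k] QP unfolding Q_def by blast
    qed
    show "\<forall>\<^sub>F k in sequentially. hm (Psi n f k A) P \<le> p k * hm A C + hm (K k) P"
    proof (rule always_eventually, rule allI)
      fix k
      have "hm (Psi n f k A) P \<le> hm (Psi n f k A) (K k) + hm (K k) P"
        using hm_triangle[of "Psi n f k A" "K k" P] PsiQ[OF QA, of k] QK[of k] QP unfolding Q_def by blast
      also have "\<dots> \<le> p k * hm A C + hm (K k) P"
        using Psicontr[OF QA QC, of k] unfolding K_def by simp
      finally show "hm (Psi n f k A) P \<le> p k * hm A C + hm (K k) P" .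
    qed
    show "(\<lambda>_. 0) \<longlonglongrightarrow> (0::real)" by simp
    show "(\<lambda>k. p k * hm A C + hm (K k) P) \<longlonglongrightarrow> 0"
      using tendsto_add[OF tendsto_mult_left_zero[OF p0, of "hm A C"] nc(3)] by simp
  qed
  show ?thesis
  proof (rule ex1I[where a=P])
    show "P \<subseteq> C \<and> P \<noteq> {} \<and> compact P \<and>
           (\<forall>A. A \<noteq> {} \<and> compact A \<and> A \<subseteq> C \<longrightarrow> (\<lambda>k. hm (Psi n f k A) P) \<longlonglongrightarrow> 0)"
      using QP conv unfolding Q_def by blast
  next
    fix P' assume H: "P' \<subseteq> C \<and> P' \<noteq> {} \<and> compact P' \<and>
           (\<forall>A. A \<noteq> {} \<and> compact A \<and> A \<subseteq> C \<longrightarrow> (\<lambda>k. hm (Psi n f k A) P') \<longlonglongrightarrow> 0)"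
    then have QP': "Q P'" by (simp add: Q_def)
    have l1: "(\<lambda>k. hm (K k) P') \<longlonglongrightarrow> 0" using H C_compact C_ne unfolding K_def by blast
    have l2: "(\<lambda>k. hm (K k) P) \<longlonglongrightarrow> 0" using conv[OF QC] unfolding K_def .
    have "hm P P' \<le> 0 + 0"
    proof (rule tendsto_le[OF _ tendsto_add[OF l2 l1] tendsto_const])
      show "\<forall>\<^sub>F k in sequentially. hm P P' \<le> hm (K k) P + hm (K k) P'"
      proof (rule always_eventually, rule allI)
        fix k
        have "hm P P' \<le> hm P (K k) + hm (K k) P'"
          using hm_triangle[of P "K k" P'] QK[of k] QP QP' unfolding Q_def by blast
        then show "hm P P' \<le> hm (K k) P + hm (K k) P'" by (simp add: hm_sym)
      qed
    qed simp
    then show "P' = P" using hm_zero[of P P'] QP QP' unfolding Q_def by simp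
  qed
qed

end
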